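(* Let $\gamma\in V$ be an element of finite order. Then $\gamma$ admits a non-empty open weakly $\gamma$-wandering subset of $S^1$. If moreover $\gamma\in T$, then $\gamma$ admits a non-empty open $\gamma$-wandering subset of $S^1$ (in fact, in that case any weakly $\gamma$-wandering set is $\gamma$-wandering).
   Context: $S^1$ is the interval $[0,1]$ with $0$ and $1$ identified. Thompson's group $T$ is the group of piecewise linear orientation-preserving homeomorphisms of $S^1$ which preserve the set of finite dyadic fractions, have finitely many breakpoints, all at finite dyadic fractions, and all slopes integer powers of $2$. Thompson's group $V$ is the group of left-continuous bijections of $S^1$ which map finite dyadic fractions to finite dyadic fractions, are differentiable except at finitely many finite dyadic fractions, and on each maximal interval of differentiability are linear with slope an integer power of $2$; $T\le V$. For $\gamma\in V$, a subset $U\subseteq S^1$ is $\gamma$-wandering if for every $n\in\mathbb{Z}$ with $\gamma^n\neq e$ we have $\gamma^n(U)\cap U=\emptyset$; $U$ is weakly $\gamma$-wandering if for every $n\in\mathbb{Z}$, either $\gamma^n$ fixes $U$ pointwise or $\gamma^n(U)\cap U=\emptyset$. *)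

theory Defs
  imports "HOL-Analysis.Analysis"
begin

text \<open>The circle S^1 = [0,1] with 0 and 1 identified is modelled by the
half-open interval (0,1] (the point 0 = 1 is represented by 1).  This
representation suits left-continuous maps, whose pieces are intervals (a,b].\<close>

definition S1 :: "real set" where
  "S1 = {0<..1}"

definition circ :: "real \<Rightarrow> real" where
  "circ x = x - of_int \<lceil>x\<rceil> + 1"

definition s1_open :: "real set \<Rightarrow> bool" where
  "s1_open U \<longleftrightarrow> U \<subseteq> S1 \<and> open (circ -` U)"

definition dyadic :: "real \<Rightarrow> bool" where
  "dyadic x \<longleftrightarrow> (\<exists>m::int. \<exists>n::nat. x = of_int m / 2 ^ n)"

text \<open>Thompson's group V: left-continuous bijections of S^1, piecewise linear
(as circle maps) on finitely many intervals (a_i, a_(i+1)] with dyadic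
endpoints, each piece of slope an integer power of 2 and mapping dyadics to
dyadics (i.e. with dyadic intercept).\<close>
definition thompsonV :: "(real \<Rightarrow> real) \<Rightarrow> bool" where
  "thompsonV g \<longleftrightarrow> bij_betw g S1 S1 \<and>
     (\<exists>bs::real list. length bs \<ge> 2 \<and> sorted_wrt (<) bs \<and> hd bs = 0 \<and> last bs = 1 \<and>
        (\<forall>b\<in>set bs. dyadic b) \<and>
        (\<forall>i < length bs - 1. \<exists>k::int. \<exists>c::real. dyadic c \<and>
            (\<forall>x \<in> {bs ! i <.. bs ! Suc i}. g x = circ (2 powi k * x + c))))"

text \<open>Thompson's group T: elements of V that are orientation-preserving
homeomorphisms of S^1, i.e. admit a continuous increasing lift F : R -> R
with F(x+1) = F(x) + 1.\<close>
definition thompsonT :: "(real \<Rightarrow> real) \<Rightarrow> bool" where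
  "thompsonT g \<longleftrightarrow> thompsonV g \<and>
     (\<exists>F::real \<Rightarrow> real. continuous_on UNIV F \<and> strict_mono F \<and>
        (\<forall>x. F (x + 1) = F x + 1) \<and> (\<forall>x. g (circ x) = circ (F x)))"

definition zpow :: "(real \<Rightarrow> real) \<Rightarrow> int \<Rightarrow> real \<Rightarrow> real" where
  "zpow g n = (if 0 \<le> n then g ^^ nat n else (inv_into S1 g) ^^ nat (- n))"

definition is_id :: "(real \<Rightarrow> real) \<Rightarrow> bool" where
  "is_id h \<longleftrightarrow> (\<forall>x\<in>S1. h x = x)"

definition finite_order :: "(real \<Rightarrow> real) \<Rightarrow> bool" where
  "finite_order g \<longleftrightarrow> (\<exists>n::nat. n > 0 \<and> is_id (g ^^ n))"

definition wandering :: "(real \<Rightarrow> real) \<Rightarrow> real set \<Rightarrow> bool" where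
  "wandering g U \<longleftrightarrow> (\<forall>n::int. \<not> is_id (zpow g n) \<longrightarrow> zpow g n ` U \<inter> U = {})"

definition weakly_wandering :: "(real \<Rightarrow> real) \<Rightarrow> real set \<Rightarrow> bool" where
  "weakly_wandering g U \<longleftrightarrow>
     (\<forall>n::int. (\<forall>x\<in>U. zpow g n x = x) \<or> zpow g n ` U \<inter> U = {})"

end

theory Submission
  imports Defs
begin


lemma circ_shift: "circ (t + of_int j) = circ t"
  unfolding circ_def by simp

lemma circ_shift': "circ (t - of_int j) = circ t"
  using circ_shift[of t "-j"] by simp

lemma circ_id: "0 < y \<Longrightarrow> y \<le> 1 \<Longrightarrow> circ y = y"
  unfolding circ_def by (simp add: ceiling_eq_iff)

lemma circ_S1: "circ t \<in> S1"
  unfolding circ_def S1_def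
  using ceiling_correct[of t] by (auto simp: algebra_simps)

lemma circ_eq_int: "circ t = y \<Longrightarrow> t - y = of_int (\<lceil>t\<rceil> - 1)"
  unfolding circ_def by auto

lemma circ_eq_circ: "circ a = circ b \<Longrightarrow> \<exists>j::int. a = b + of_int j"
  unfolding circ_def by (rule exI[of _ "\<lceil>a\<rceil> - \<lceil>b\<rceil>"]) (auto simp: algebra_simps)

lemma circ_interval: "of_int n < t \<Longrightarrow> t < of_int n + 1 \<Longrightarrow> circ t = t - of_int n"
proof -
  assume a: "of_int n < t" "t < of_int n + 1"
  have "\<lceil>t\<rceil> = n + 1" using a by (simp add: ceiling_eq_iff)
  thus ?thesis unfolding circ_def by simp
qed

definition locaff :: "(real \<Rightarrow> real) \<Rightarrow> real \<Rightarrow> int \<Rightarrow> real \<Rightarrow> bool" where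
  "locaff h x m c \<longleftrightarrow> (\<exists>e>0. \<forall>y. \<bar>y - x\<bar> < e \<longrightarrow> h y = circ (2 powi m * y + c))"

lemma locaff_id: "0 < x \<Longrightarrow> x < 1 \<Longrightarrow> locaff id x 0 0"
  unfolding locaff_def
  by (rule exI[of _ "min x (1 - x)"]) (auto simp: circ_id abs_less_iff)

lemma locaff_comp:
  assumes h1: "locaff h1 p a d" and h2: "locaff h2 x b c" and px: "h2 x = p"
    and p: "0 < p" "p < 1"
  shows "\<exists>c'. locaff (h1 \<circ> h2) x (a + b) c'"
proof -
  obtain d1 where d1: "d1 > 0" "\<And>z. \<bar>z - p\<bar> < d1 \<Longrightarrow> h1 z = circ (2 powi a * z + d)"
    using h1 unfolding locaff_def by blast
  obtain e where e: "e > 0" "\<And>y. \<bar>y - x\<bar> < e \<Longrightarrow> h2 y = circ (2 powi b * y + c)"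
    using h2 unfolding locaff_def by blast
  define t0 where "t0 = 2 powi b * x + c"
  define n0 where "n0 = \<lceil>t0\<rceil> - 1"
  have pt: "p = t0 - of_int n0" using e(2)[of x] e(1) px unfolding t0_def n0_def circ_def by simp
  define r where "r = min (min p (1 - p)) d1"
  have r: "r > 0" using p d1 unfolding r_def by simp
  have bpos: "2 powi b > (0::real)" by simp
  define e' where "e' = min e (r / 2 powi b)"
  have e': "e' > 0" using e r bpos unfolding e'_def by simp
  show ?thesis
  proof (rule exI[of _ "2 powi a * (c - of_int n0) + d"], unfold locaff_def, rule exI[of _ e'], intro conjI allI impI)
    show "e' > 0" by fact
    fix y assume y: "\<bar>y - x\<bar> < e'"
    define t where "t = 2 powi b * y + c"
    have "\<bar>t - t0\<bar> = 2 powi b * \<bar>y - x\<bar>" proof -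
      have "t - t0 = 2 powi b * (y - x)" unfolding t_def t0_def by (simp add: algebra_simps)
      thus ?thesis using bpos by (simp add: abs_mult)
    qed
    also have "\<dots> < 2 powi b * (r / 2 powi b)"
      using y bpos unfolding e'_def by (intro mult_strict_left_mono) auto
    also have "\<dots> = r" using bpos by simp
    finally have tt: "\<bar>t - t0\<bar> < r" .
    have "of_int n0 < t" "t < of_int n0 + 1" using tt pt unfolding r_def by (auto simp: abs_less_iff)
    hence ct: "circ t = t - of_int n0" by (rule circ_interval)
    have h2y: "h2 y = t - of_int n0" using e(2)[of y] y ct unfolding e'_def t_def by simp
    have "\<bar>h2 y - p\<bar> < d1" using h2y pt tt unfolding r_def by simp
    hence "h1 (h2 y) = circ (2 powi a * (t - of_int n0) + d)" using d1(2) h2y by simp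
    also have "2 powi a * (t - of_int n0) + d = 2 powi (a + b) * y + (2 powi a * (c - of_int n0) + d)"
      unfolding t_def by (simp add: power_int_add algebra_simps)
    finally show "(h1 \<circ> h2) y = circ (2 powi (a + b) * y + (2 powi a * (c - of_int n0) + d))" by simp
  qed
qed

lemma locaff_iter:
  assumes h: "locaff h x m c" and hx: "h x = x" and x: "0 < x" "x < 1"
  shows "\<exists>c'. locaff (h ^^ n) x (int n * m) c'"
proof (induction n)
  case 0
  show ?case using locaff_id[OF x] unfolding id_def by auto
next
  case (Suc n)
  then obtain c' where c': "locaff (h ^^ n) x (int n * m) c'" by blast
  have fx: "(h ^^ n) x = x" by (induction n) (auto simp: hx)
  from locaff_comp[OF h c' fx x] obtain c'' where "locaff (h \<circ> h ^^ n) x (m + int n * m) c''" by blast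
  moreover have "h ^^ Suc n = h \<circ> h ^^ n" by simp
  moreover have "int (Suc n) * m = m + int n * m" by (simp add: algebra_simps)
  ultimately show ?case by metis
qed

lemma int_between: "of_int (k::int) < (t::real) \<Longrightarrow> t < of_int k + 1 \<Longrightarrow> t = of_int j \<Longrightarrow> False"
proof -
  assume a: "of_int k < t" "t < of_int k + 1" "t = of_int j"
  hence "k < j" "j < k + 1" by (simp_all add: of_int_less_iff[symmetric] del: of_int_less_iff)
  thus False by simp
qed

lemma slope_one:
  assumes e: "e > 0" and h: "\<And>y. \<bar>y - x\<bar> < e \<Longrightarrow> circ (2 powi s * y + c) = y"
  shows "s = 0"
proof -
  define a :: real where "a = 2 powi s - 1"
  have I: "\<exists>j::int. a * y + c = of_int j" if "\<bar>y - x\<bar> < e" for y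
    using circ_eq_int[OF h[OF that]] unfolding a_def
    by (intro exI[of _ "\<lceil>2 powi s * y + c\<rceil> - 1"]) (simp add: algebra_simps)
  have a0: "a = 0"
  proof (rule ccontr)
    assume an: "a \<noteq> 0"
    define \<eta> where "\<eta> = min (e / 2) (1 / (2 * \<bar>a\<bar>))"
    have eta: "\<eta> > 0" "\<eta> < e" "\<eta> \<le> 1 / (2 * \<bar>a\<bar>)" using e an unfolding \<eta>_def by auto
    obtain j1 where j1: "a * x + c = of_int j1" using I[of x] e by auto
    obtain j2 where j2: "a * (x + \<eta>) + c = of_int j2" using I[of "x + \<eta>"] eta by auto
    have d: "a * \<eta> = of_int (j2 - j1)" using j1 j2 by (simp add: algebra_simps)
    have "\<bar>a * \<eta>\<bar> = \<bar>a\<bar> * \<eta>" using eta by (simp add: abs_mult)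
    also have "\<dots> \<le> \<bar>a\<bar> * (1 / (2 * \<bar>a\<bar>))" using eta by (intro mult_left_mono) auto
    also have "\<dots> = 1/2" using an by simp
    finally have "\<bar>a * \<eta>\<bar> \<le> 1/2" .
    moreover have "\<bar>a * \<eta>\<bar> > 0" using an eta by simp
    ultimately show False using d int_between[of 0 "a * \<eta>" "j2 - j1"] int_between[of "-1" "a * \<eta>" "j2 - j1"]
      by (cases "a * \<eta> > 0") (auto simp: abs_if split: if_splits)
  qed
  hence p1: "(2::real) powi s = 1" unfolding a_def by simp
  show "s = 0"
  proof (rule ccontr)
    assume "s \<noteq> 0"
    then consider "s > 0" | "s < 0" by linarith
    thus False
    proof cases
      case 1 thus False using one_less_power_int[of "2::real" s] p1 by simp
    next
      case 2
      have "1 < (2::real) powi (-s)" using 2 by (intro one_less_power_int) auto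
      thus False using p1 by (simp add: power_int_minus)
    qed
  qed
qed

lemma locaff_fix:
  assumes h: "locaff h x m c" and hx: "h x = x" and x: "0 < x" "x < 1"
    and N: "N > 0" and idN: "\<And>y. y \<in> S1 \<Longrightarrow> (h ^^ N) y = y"
  shows "\<exists>e>0. \<forall>y. \<bar>y - x\<bar> < e \<longrightarrow> h y = y"
proof -
  obtain c' where "locaff (h ^^ N) x (int N * m) c'" using locaff_iter[OF h hx x] by blast
  then obtain e1 where e1: "e1 > 0" "\<And>y. \<bar>y - x\<bar> < e1 \<Longrightarrow> (h ^^ N) y = circ (2 powi (int N * m) * y + c')"
    unfolding locaff_def by blast
  define e2 where "e2 = min e1 (min x (1 - x))"
  have e2: "e2 > 0" using e1 x unfolding e2_def by simp
  have "circ (2 powi (int N * m) * y + c') = y" if "\<bar>y - x\<bar> < e2" for y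
  proof -
    have "y \<in> S1" using that unfolding e2_def S1_def by (auto simp: abs_less_iff)
    thus ?thesis using e1(2)[of y] idN[of y] that unfolding e2_def by simp
  qed
  from slope_one[OF e2 this] have "int N * m = 0" .
  hence m0: "m = 0" using N by simp
  obtain e where e: "e > 0" "\<And>y. \<bar>y - x\<bar> < e \<Longrightarrow> h y = circ (2 powi m * y + c)"
    using h unfolding locaff_def by blast
  have "circ (x + c) = x" using e(2)[of x] e(1) hx m0 by simp
  from circ_eq_int[OF this] have cj: "c = of_int (\<lceil>x + c\<rceil> - 1)" by simp
  show ?thesis
  proof (rule exI[of _ "min e (min x (1 - x))"], intro conjI allI impI)
    show "min e (min x (1 - x)) > 0" using e x by simp
    fix y assume y: "\<bar>y - x\<bar> < min e (min x (1 - x))"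
    have "h y = circ (y + c)" using e(2)[of y] y m0 by simp
    also have "\<dots> = circ y" by (subst cj) (rule circ_shift)
    also have "\<dots> = y" using y by (intro circ_id) (auto simp: abs_less_iff)
    finally show "h y = y" .
  qed
qed

lemma locaff_move:
  assumes h: "locaff h x m c" and hx: "h x \<noteq> x" and x: "0 < x" "x < 1"
  shows "\<exists>e>0. \<forall>y z. \<bar>y - x\<bar> < e \<longrightarrow> \<bar>z - x\<bar> < e \<longrightarrow> h y \<noteq> z"
proof -
  obtain e1 where e1: "e1 > 0" "\<And>y. \<bar>y - x\<bar> < e1 \<Longrightarrow> h y = circ (2 powi m * y + c)"
    using h unfolding locaff_def by blast
  define t0 where "t0 = 2 powi m * x + c"
  define r where "r = t0 - x"
  define fl where "fl = \<lfloor>r\<rfloor>"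
  have hx': "h x = circ t0" using e1 unfolding t0_def by simp
  have rne: "r \<noteq> of_int fl"
  proof
    assume "r = of_int fl"
    hence "circ t0 = circ x" unfolding r_def using circ_shift[of x fl] by (simp add: algebra_simps)
    thus False using hx hx' circ_id[of x] x by simp
  qed
  have rfl: "of_int fl < r" "r < of_int fl + 1" using rne unfolding fl_def
    using floor_correct[of r] by (auto simp: less_le)
  define \<delta> where "\<delta> = min (r - of_int fl) (of_int fl + 1 - r)"
  have d: "\<delta> > 0" using rfl unfolding \<delta>_def by simp
  define K :: real where "K = 2 powi m + 1"
  have K: "K > 0" unfolding K_def by (simp add: add_pos_pos)
  define e where "e = min e1 (\<delta> / (2 * K))"
  have e: "e > 0" using e1 d K unfolding e_def by simp
  show ?thesis
  proof (rule exI[of _ e], intro conjI allI impI e)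
    fix y z assume y: "\<bar>y - x\<bar> < e" and z: "\<bar>z - x\<bar> < e"
    define t where "t = 2 powi m * y + c"
    have "t - z - r = 2 powi m * (y - x) - (z - x)" unfolding t_def r_def t0_def by (simp add: algebra_simps)
    hence "\<bar>t - z - r\<bar> \<le> \<bar>2 powi m * (y - x)\<bar> + \<bar>z - x\<bar>" by (metis abs_triangle_ineq4)
    also have "\<dots> = 2 powi m * \<bar>y - x\<bar> + \<bar>z - x\<bar>" by (simp add: abs_mult)
    also have "\<dots> \<le> 2 powi m * e + e" using y z by (intro add_mono mult_left_mono) auto
    also have "\<dots> = K * e" unfolding K_def by (simp add: algebra_simps)
    also have "\<dots> \<le> K * (\<delta> / (2 * K))"
      using K unfolding e_def by (intro mult_left_mono) auto
    also have "\<dots> = \<delta> / 2" using K by simp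
    also have "\<dots> < \<delta>" using d by simp
    finally have tz: "\<bar>t - z - r\<bar> < \<delta>" .
    show "h y \<noteq> z"
    proof
      assume "h y = z"
      hence "circ t = z" using e1(2)[of y] y unfolding e_def t_def by simp
      from circ_eq_int[OF this] have "t - z = of_int (\<lceil>t\<rceil> - 1)" .
      thus False using int_between[of fl "t - z" "\<lceil>t\<rceil> - 1"] tz unfolding \<delta>_def by (auto simp: abs_less_iff)
    qed
  qed
qed



lemma iter_id: "(\<And>y. y \<in> A \<Longrightarrow> f y = y) \<Longrightarrow> y \<in> A \<Longrightarrow> (f ^^ q) y = y"
  by (induction q) auto

lemma lift_iter: "(\<And>y. f (circ y) = circ (L y)) \<Longrightarrow> (f ^^ n) (circ y) = circ ((L ^^ n) y)"
  by (induction n) auto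

lemma iter_mono: "strict_mono (H::real \<Rightarrow> real) \<Longrightarrow> a < b \<Longrightarrow> (H ^^ n) a < (H ^^ n) b"
  by (induction n) (auto simp: strict_mono_def)

lemma iter_per: fixes H :: "real \<Rightarrow> real" assumes "\<And>y. H (y + 1) = H y + 1"
  shows "(H ^^ n) (y + 1) = (H ^^ n) y + 1"
proof (induction n)
  case (Suc n) thus ?case using assms[of "(H ^^ n) y"] by simp
qed simp

lemma per_nat: assumes "\<And>y. H (y + 1) = H y + (1::real)" shows "H (y + of_nat n) = H y + of_nat n"
proof (induction n)
  case (Suc n)
  have "H (y + of_nat (Suc n)) = H ((y + of_nat n) + 1)" by (simp add: algebra_simps)
  also have "\<dots> = H y + of_nat n + 1" using assms Suc by simp
  finally show ?case by simp
qed simp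

lemma per_int: assumes "\<And>y. H (y + 1) = H y + (1::real)" shows "H (y + of_int j) = H y + of_int j"
proof (cases "j \<ge> 0")
  case True
  then obtain n where "j = int n" by (intro that[of "nat j"]) simp
  thus ?thesis using per_nat[of H, OF assms] by simp
next
  case False
  then obtain n where n: "j = - int n" by (intro that[of "nat (- j)"]) simp
  have e: "H (y - of_nat n + of_nat n) = H (y - of_nat n) + of_nat n" by (rule per_nat[of H, OF assms])
  hence "H y = H (y - of_nat n) + of_nat n" by simp
  thus ?thesis using n by (simp add: algebra_simps)
qed

lemma Tcore:
  fixes F :: "real \<Rightarrow> real"
  assumes sm: "strict_mono F" and per: "\<And>y. F (y + 1) = F y + 1"
    and lift: "\<And>y. g (circ y) = circ (F y)"
    and N: "N > 0" and idN: "\<And>y. y \<in> S1 \<Longrightarrow> (g ^^ N) y = y"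
    and x: "x \<in> S1" and fx: "(g ^^ k) x = x"
  shows "\<forall>y\<in>S1. (g ^^ k) y = y"
proof -
  define G where "G = F ^^ k"
  have Gper: "G (y + 1) = G y + 1" for y unfolding G_def by (rule iter_per[of F, OF per])
  have Glift: "(g ^^ k) (circ y) = circ (G y)" for y unfolding G_def by (rule lift_iter[of g F, OF lift])
  have x01: "0 < x" "x \<le> 1" using x unfolding S1_def by auto
  have cx: "circ x = x" using circ_id x01 by simp
  have "circ (G x) = circ x" using Glift[of x] cx fx by simp
  then obtain j where j: "G x = x + of_int j" using circ_eq_circ by blast
  define H where "H y = G y - of_int j" for y
  have Hsm: "strict_mono H" unfolding H_def G_def strict_mono_def using iter_mono[OF sm] by auto
  have Hper: "H (y + 1) = H y + 1" for y unfolding H_def using Gper by simp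
  have Hx: "H x = x" unfolding H_def using j by simp
  have Hlift: "(g ^^ k) (circ y) = circ (H y)" for y
    using Glift[of y] circ_shift'[of "G y" j] unfolding H_def by simp
  have idk: "((g ^^ k) ^^ N) z = z" if "z \<in> S1" for z
  proof -
    have "((g ^^ k) ^^ N) = (g ^^ N) ^^ k" by (simp add: funpow_mult mult.commute)
    thus ?thesis using iter_id[of S1 "g ^^ N", OF idN that] by simp
  qed
  have HN: "circ ((H ^^ N) y) = circ y" for y
    using lift_iter[of "g ^^ k" H N y, OF Hlift] idk[OF circ_S1[of y]] by simp
  have Hnx: "(H ^^ n) x = x" for n by (induction n) (auto simp: Hx)
  have Hnx1: "(H ^^ n) (x + 1) = x + 1" for n using iter_per[of H, OF Hper, of n x] Hnx by simp
  have fixN: "(H ^^ N) y = y" if y: "x < y" "y < x + 1" for y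
  proof -
    have a: "x < (H ^^ N) y" "(H ^^ N) y < x + 1"
      using iter_mono[OF Hsm y(1), of N] iter_mono[OF Hsm y(2), of N] Hnx Hnx1 by auto
    obtain j' where j': "(H ^^ N) y = y + of_int j'" using circ_eq_circ[OF HN[of y]] by blast
    have "-1 < j'" "j' < 1" using a y j'
      by (simp_all add: of_int_less_iff[symmetric] del: of_int_less_iff)
    hence "j' = 0" by simp
    thus ?thesis using j' by simp
  qed
  have fix1: "H y = y" if y: "x < y" "y < x + 1" for y
  proof (rule ccontr)
    assume ne: "H y \<noteq> y"
    then consider "H y > y" | "H y < y" by linarith
    thus False
    proof cases
      case 1
      have step: "(H ^^ Suc n) y > (H ^^ n) y" for n
      proof (induction n)
        case 0 thus ?case using 1 by simp
      next
        case (Suc n) thus ?case using Hsm by (simp add: strict_mono_def)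
      qed
      have ge: "(H ^^ n) y \<ge> y" for n
      proof (induction n)
        case (Suc n) thus ?case using step[of n] by simp
      qed simp
      have "(H ^^ Suc (N - 1)) y > y" using step[of "N - 1"] ge[of "N - 1"] by simp
      thus False using fixN[OF y] N by simp
    next
      case 2
      have step: "(H ^^ Suc n) y < (H ^^ n) y" for n
      proof (induction n)
        case 0 thus ?case using 2 by simp
      next
        case (Suc n) thus ?case using Hsm by (simp add: strict_mono_def)
      qed
      have ge: "(H ^^ n) y \<le> y" for n
      proof (induction n)
        case (Suc n) thus ?case using step[of n] by simp
      qed simp
      have "(H ^^ Suc (N - 1)) y < y" using step[of "N - 1"] ge[of "N - 1"] by simp
      thus False using fixN[OF y] N by simp
    qed
  qed
  show ?thesis
  proof
    fix z assume z: "z \<in> S1"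
    hence z01: "0 < z" "z \<le> 1" unfolding S1_def by auto
    obtain y where y: "x \<le> y" "y < x + 1" "circ y = z"
    proof (cases "x \<le> z")
      case True thus ?thesis using that[of z] z01 x01 circ_id by simp
    next
      case False
      have "circ (z + 1) = z" using circ_shift[of z 1] circ_id z01 by simp
      thus ?thesis using that[of "z + 1"] False z01 x01 by simp
    qed
    have "H y = y" using fix1[of y] Hx y by (cases "x = y") auto
    thus "(g ^^ k) z = z" using Hlift[of y] y by simp
  qed
qed



lemma piece_find:
  fixes bs :: "real list"
  assumes len: "length bs \<ge> 2" and s: "sorted_wrt (<) bs" and h: "hd bs = 0" and l: "last bs = 1"
    and p: "0 < p" "p < 1" "p \<notin> set bs"
  shows "\<exists>i < length bs - 1. bs ! i < p \<and> p < bs ! Suc i"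
proof -
  define I where "I = {i. i < length bs \<and> bs ! i < p}"
  have fin: "finite I" unfolding I_def by simp
  have b0: "bs ! 0 = 0" using h len by (cases bs) auto
  have bne: "bs \<noteq> []" using len by auto
  have bl: "bs ! (length bs - 1) = 1" using l last_conv_nth[OF bne] by simp
  have "0 \<in> I" unfolding I_def using b0 p bne by simp
  hence ne: "I \<noteq> {}" by auto
  define i where "i = Max I"
  have iI: "i \<in> I" unfolding i_def using fin ne by simp
  have il: "i < length bs - 1"
  proof -
    have "i < length bs" "bs ! i < p" using iI unfolding I_def by auto
    moreover have "i \<noteq> length bs - 1" using bl p calculation by auto
    ultimately show ?thesis by simp
  qed
  have "Suc i \<notin> I" using Max_ge[OF fin, of "Suc i"] unfolding i_def by auto
  hence "\<not> bs ! Suc i < p" using il unfolding I_def by simp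
  moreover have "bs ! Suc i \<noteq> p" using p(3) il nth_mem[of "Suc i" bs] by auto
  ultimately show ?thesis using il iI unfolding I_def by (intro exI[of _ i]) auto
qed

lemma g_locaff:
  assumes V: "thompsonV g" and "bs = bs" and len: "length bs \<ge> 2" and s: "sorted_wrt (<) bs"
    and h: "hd bs = 0" and l: "last bs = 1"
    and pc: "\<forall>i < length bs - 1. \<exists>k::int. \<exists>c::real. dyadic c \<and>
            (\<forall>x \<in> {bs ! i <.. bs ! Suc i}. g x = circ (2 powi k * x + c))"
    and p: "0 < p" "p < 1" "p \<notin> set bs"
  shows "\<exists>k c. locaff g p k c"
proof -
  obtain i where i: "i < length bs - 1" "bs ! i < p" "p < bs ! Suc i"
    using piece_find[OF len s h l p] by blast
  obtain k c where kc: "\<forall>x \<in> {bs ! i <.. bs ! Suc i}. g x = circ (2 powi k * x + c)"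
    using pc i(1) by blast
  have "locaff g p k c" unfolding locaff_def
  proof (rule exI[of _ "min (p - bs ! i) (bs ! Suc i - p)"], intro conjI allI impI)
    show "0 < min (p - bs ! i) (bs ! Suc i - p)" using i by simp
    fix y assume "\<bar>y - p\<bar> < min (p - bs ! i) (bs ! Suc i - p)"
    hence "y \<in> {bs ! i <.. bs ! Suc i}" by (simp add: abs_less_iff)
    thus "g y = circ (2 powi k * y + c)" using kc by blast
  qed
  thus ?thesis by blast
qed

lemma zpow_red:
  assumes bij: "bij_betw g S1 S1" and N: "N > 0" and idN: "\<And>y. y \<in> S1 \<Longrightarrow> (g ^^ N) y = y"
  shows "\<exists>k<N. \<forall>y\<in>S1. zpow g n y = (g ^^ k) y"
proof -
  have inS: "(g ^^ j) y \<in> S1" if "y \<in> S1" for j y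
    using bij_betw_apply[OF bij_betw_funpow[OF bij, of j] that] .
  have inj: "inj_on g S1" using bij by (rule bij_betw_imp_inj_on)
  have modN: "(g ^^ j) y = (g ^^ (j mod N)) y" if "y \<in> S1" for j y
  proof -
    have e1: "g ^^ (j div N * N) = (g ^^ N) ^^ (j div N)" by (simp add: funpow_mult mult.commute)
    have "g ^^ j = g ^^ (j div N * N + j mod N)" by simp
    also have "\<dots> = g ^^ (j div N * N) \<circ> g ^^ (j mod N)" by (rule funpow_add)
    finally have "(g ^^ j) y = ((g ^^ N) ^^ (j div N)) ((g ^^ (j mod N)) y)" using e1 by simp
    also have "\<dots> = (g ^^ (j mod N)) y" using iter_id[of S1 "g ^^ N", OF idN inS[OF that]] by simp
    finally show ?thesis .
  qed
  have inv1: "inv_into S1 g y = (g ^^ (N - 1)) y" if "y \<in> S1" for y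
  proof (rule inv_into_f_eq[OF inj inS[OF that]])
    have "g ((g ^^ (N - 1)) y) = (g ^^ Suc (N - 1)) y" by simp
    also have "Suc (N - 1) = N" using N by simp
    finally show "g ((g ^^ (N - 1)) y) = y" using idN[OF that] by simp
  qed
  have invm: "(inv_into S1 g ^^ m) y = (g ^^ ((N - 1) * m)) y" if "y \<in> S1" for m y
  proof (induction m)
    case (Suc m)
    have "(inv_into S1 g ^^ Suc m) y = inv_into S1 g ((g ^^ ((N - 1) * m)) y)" using Suc by simp
    also have "\<dots> = (g ^^ (N - 1)) ((g ^^ ((N - 1) * m)) y)" by (rule inv1[OF inS[OF that]])
    also have "\<dots> = (g ^^ ((N - 1) + (N - 1) * m)) y" by (simp add: funpow_add)
    finally show ?case by simp
  qed simp
  obtain j where j: "\<forall>y\<in>S1. zpow g n y = (g ^^ j) y"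
  proof (cases "0 \<le> n")
    case True thus ?thesis using that[of "nat n"] unfolding zpow_def by simp
  next
    case False thus ?thesis using that[of "(N - 1) * nat (- n)"] invm unfolding zpow_def by simp
  qed
  show ?thesis
  proof (intro exI[of _ "j mod N"] conjI ballI)
    show "j mod N < N" using N by simp
    fix y assume "y \<in> S1"
    thus "zpow g n y = (g ^^ (j mod N)) y" using j modN[of y j] by simp
  qed
qed



lemma part1:
  assumes V: "thompsonV g" and N: "N > 0" and idN: "\<And>y. y \<in> S1 \<Longrightarrow> (g ^^ N) y = y"
  shows "\<exists>U. s1_open U \<and> U \<noteq> {} \<and> weakly_wandering g U"
proof -
  have bij: "bij_betw g S1 S1" using V unfolding thompsonV_def by blast
  obtain bs :: "real list" where len: "length bs \<ge> 2" and s: "sorted_wrt (<) bs"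
    and h: "hd bs = 0" and l: "last bs = 1"
    and pc: "\<forall>i < length bs - 1. \<exists>k::int. \<exists>c::real. dyadic c \<and>
            (\<forall>x \<in> {bs ! i <.. bs ! Suc i}. g x = circ (2 powi k * x + c))"
    using V unfolding thompsonV_def by blast
  have inS: "(g ^^ j) y \<in> S1" if "y \<in> S1" for j y
    using bij_betw_apply[OF bij_betw_funpow[OF bij, of j] that] .
  have injj: "inj_on (g ^^ j) S1" for j using bij_betw_imp_inj_on[OF bij_betw_funpow[OF bij, of j]] .
  define Bad where "Bad = (\<Union>j<N. (g ^^ j) -` set bs \<inter> S1)"
  have fB: "finite Bad" unfolding Bad_def
  proof (rule finite_UN_I)
    fix j show "finite ((g ^^ j) -` set bs \<inter> S1)" by (rule finite_vimage_IntI[OF _ injj]) simp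
  qed simp
  have "infinite ({0<..<1::real} - Bad)" using fB by (intro Diff_infinite_finite) auto
  then obtain x where x: "x \<in> {0<..<1}" "x \<notin> Bad" by (metis Diff_iff finite.emptyI ex_in_conv)
  have xS: "x \<in> S1" using x unfolding S1_def by auto
  have bne: "bs \<noteq> []" using len by auto
  have one: "1 \<in> set bs" using l last_in_set[OF bne] by simp
  have orb: "0 < (g ^^ j) x \<and> (g ^^ j) x < 1 \<and> (g ^^ j) x \<notin> set bs" if "j < N" for j
  proof -
    have nb: "(g ^^ j) x \<notin> set bs" using x(2) that xS unfolding Bad_def by auto
    moreover have "(g ^^ j) x \<in> S1" by (rule inS[OF xS])
    ultimately show ?thesis using one unfolding S1_def by (auto simp: less_le)
  qed
  have chain: "\<exists>m c. locaff (g ^^ j) x m c" if "j \<le> N" for j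
    using that
  proof (induction j)
    case 0 thus ?case using locaff_id[of x] x unfolding id_def by auto
  next
    case (Suc j)
    then obtain m c where mc: "locaff (g ^^ j) x m c" by auto
    have o: "0 < (g ^^ j) x" "(g ^^ j) x < 1" "(g ^^ j) x \<notin> set bs" using orb Suc by auto
    obtain k d where kd: "locaff g ((g ^^ j) x) k d" using g_locaff[OF V refl len s h l pc o] by blast
    from locaff_comp[OF kd mc refl o(1,2)] obtain c' where "locaff (g \<circ> g ^^ j) x (k + m) c'" by blast
    moreover have "g ^^ Suc j = g \<circ> g ^^ j" by simp
    ultimately show ?case by metis
  qed
  have loc: "\<exists>e>0. (\<forall>y. \<bar>y - x\<bar> < e \<longrightarrow> (g ^^ k) y = y) \<or>
             (\<forall>y z. \<bar>y - x\<bar> < e \<longrightarrow> \<bar>z - x\<bar> < e \<longrightarrow> (g ^^ k) y \<noteq> z)" if kN: "k < N" for k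
  proof -
    obtain m c where mc: "locaff (g ^^ k) x m c" using chain[of k] kN by auto
    show ?thesis
    proof (cases "(g ^^ k) x = x")
      case True
      have idk: "((g ^^ k) ^^ N) y = y" if "y \<in> S1" for y
      proof -
        have "((g ^^ k) ^^ N) = (g ^^ N) ^^ k" by (simp add: funpow_mult mult.commute)
        thus ?thesis using iter_id[of S1 "g ^^ N", OF idN that] by simp
      qed
      show ?thesis using locaff_fix[OF mc True _ _ N idk] x by auto
    next
      case False
      show ?thesis using locaff_move[OF mc False] x by auto
    qed
  qed
  then obtain e where e: "\<And>k. k < N \<Longrightarrow> e k > 0 \<and> ((\<forall>y. \<bar>y - x\<bar> < e k \<longrightarrow> (g ^^ k) y = y) \<or>
             (\<forall>y z. \<bar>y - x\<bar> < e k \<longrightarrow> \<bar>z - x\<bar> < e k \<longrightarrow> (g ^^ k) y \<noteq> z))"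
    by metis
  define E where "E = insert (min x (1 - x)) (e ` {..<N})"
  have fE: "finite E" "E \<noteq> {}" unfolding E_def by auto
  define \<epsilon> where "\<epsilon> = Min E"
  have epos: "\<epsilon> > 0" unfolding \<epsilon>_def using fE e x unfolding E_def by auto
  have ex: "\<epsilon> \<le> min x (1 - x)" unfolding \<epsilon>_def by (rule Min_le[OF fE(1)]) (simp add: E_def)
  have ek: "\<epsilon> \<le> e k" if "k < N" for k unfolding \<epsilon>_def by (rule Min_le[OF fE(1)]) (use that in \<open>simp add: E_def\<close>)
  define U where "U = {y. \<bar>y - x\<bar> < \<epsilon>}"
  have US: "U \<subseteq> {0<..<1}" unfolding U_def using ex by (auto simp: abs_less_iff)
  have "circ -` U = (\<Union>j::int. ball (x + of_int j) \<epsilon>)"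
  proof (intro set_eqI iffI)
    fix t assume "t \<in> circ -` U"
    hence t: "circ t \<in> U" by simp
    have "t - of_int (\<lceil>t\<rceil> - 1) = circ t" unfolding circ_def by simp
    hence "t \<in> ball (x + of_int (\<lceil>t\<rceil> - 1)) \<epsilon>" using t unfolding U_def by (simp add: dist_real_def abs_minus_commute algebra_simps)
    thus "t \<in> (\<Union>j::int. ball (x + of_int j) \<epsilon>)" by blast
  next
    fix t assume "t \<in> (\<Union>j::int. ball (x + of_int j) \<epsilon>)"
    then obtain j where "t \<in> ball (x + of_int j) \<epsilon>" by blast
    hence tu: "t - of_int j \<in> U" unfolding U_def by (simp add: dist_real_def abs_minus_commute algebra_simps)
    hence "of_int j < t" "t < of_int j + 1" using US by auto
    hence "circ t = t - of_int j" by (rule circ_interval)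
    thus "t \<in> circ -` U" using tu by simp
  qed
  hence op: "open (circ -` U)" by auto
  have so: "s1_open U" unfolding s1_open_def using op US unfolding S1_def by auto
  have ne: "U \<noteq> {}" unfolding U_def using epos by (auto intro: exI[of _ x])
  have ww: "weakly_wandering g U" unfolding weakly_wandering_def
  proof
    fix n :: int
    obtain k where k: "k < N" "\<forall>y\<in>S1. zpow g n y = (g ^^ k) y" using zpow_red[OF bij N idN] by blast
    have UinS: "y \<in> S1" if "y \<in> U" for y using US that unfolding S1_def by auto
    from e[OF k(1)] show "(\<forall>y\<in>U. zpow g n y = y) \<or> zpow g n ` U \<inter> U = {}"
    proof (elim conjE disjE)
      assume a: "\<forall>y. \<bar>y - x\<bar> < e k \<longrightarrow> (g ^^ k) y = y"
      have "\<forall>y\<in>U. zpow g n y = y"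
      proof
        fix y assume y: "y \<in> U"
        hence "\<bar>y - x\<bar> < e k" using ek[OF k(1)] unfolding U_def by simp
        thus "zpow g n y = y" using a k(2) UinS[OF y] by simp
      qed
      thus ?thesis by simp
    next
      assume a: "\<forall>y z. \<bar>y - x\<bar> < e k \<longrightarrow> \<bar>z - x\<bar> < e k \<longrightarrow> (g ^^ k) y \<noteq> z"
      have "zpow g n ` U \<inter> U = {}"
      proof (rule ccontr)
        assume "zpow g n ` U \<inter> U \<noteq> {}"
        then obtain y where y: "y \<in> U" "zpow g n y \<in> U" by auto
        have "\<bar>y - x\<bar> < e k" "\<bar>zpow g n y - x\<bar> < e k" using y ek[OF k(1)] unfolding U_def by auto
        thus False using a k(2) UinS[OF y(1)] by auto
      qed
      thus ?thesis by simp
    qed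
  qed
  show ?thesis using so ne ww by blast
qed

lemma part2:
  assumes Tg: "thompsonT g" and N: "N > 0" and idN: "\<And>y. y \<in> S1 \<Longrightarrow> (g ^^ N) y = y"
  shows "\<forall>U. U \<subseteq> S1 \<longrightarrow> weakly_wandering g U \<longrightarrow> wandering g U"
proof (intro allI impI)
  fix U assume US: "U \<subseteq> S1" and ww: "weakly_wandering g U"
  have bij: "bij_betw g S1 S1" using Tg unfolding thompsonT_def thompsonV_def by blast
  obtain F :: "real \<Rightarrow> real" where sm: "strict_mono F" and per: "\<And>y. F (y + 1) = F y + 1"
    and lift: "\<And>y. g (circ y) = circ (F y)" using Tg unfolding thompsonT_def by blast
  show "wandering g U" unfolding wandering_def
  proof (intro allI impI)
    fix n :: int assume nid: "\<not> is_id (zpow g n)"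
    obtain k where k: "k < N" "\<forall>y\<in>S1. zpow g n y = (g ^^ k) y" using zpow_red[OF bij N idN] by blast
    show "zpow g n ` U \<inter> U = {}"
    proof (cases "U = {}")
      case False
      then obtain x where xU: "x \<in> U" by auto
      have xS: "x \<in> S1" using xU US by auto
      show ?thesis
      proof (rule ccontr)
        assume nd: "zpow g n ` U \<inter> U \<noteq> {}"
        hence "\<forall>y\<in>U. zpow g n y = y" using ww unfolding weakly_wandering_def by blast
        hence "(g ^^ k) x = x" using xU k(2) xS by auto
        from Tcore[OF sm per lift N idN xS this] have "\<forall>y\<in>S1. (g ^^ k) y = y" .
        hence "is_id (zpow g n)" using k(2) unfolding is_id_def by simp
        thus False using nid by simp
      qed
    qed simp
  qed
qed

theorem lemma4p3:
  fixes g :: "real \<Rightarrow> real"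
  assumes "thompsonV g" and "finite_order g"
  shows "(\<exists>U. s1_open U \<and> U \<noteq> {} \<and> weakly_wandering g U) \<and>
         (thompsonT g \<longrightarrow>
            (\<exists>U. s1_open U \<and> U \<noteq> {} \<and> wandering g U) \<and>
            (\<forall>U. U \<subseteq> S1 \<longrightarrow> weakly_wandering g U \<longrightarrow> wandering g U))"
proof -
  obtain N where N: "N > 0" "is_id (g ^^ N)" using assms(2) unfolding finite_order_def by blast
  have idN: "\<And>y. y \<in> S1 \<Longrightarrow> (g ^^ N) y = y" using N(2) unfolding is_id_def by blast
  have P1: "\<exists>U. s1_open U \<and> U \<noteq> {} \<and> weakly_wandering g U" by (rule part1[OF assms(1) N(1) idN])
  show ?thesis
  proof (intro conjI impI P1)
    assume T: "thompsonT g"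
    have P2: "\<forall>U. U \<subseteq> S1 \<longrightarrow> weakly_wandering g U \<longrightarrow> wandering g U" by (rule part2[OF T N(1) idN])
    thus "\<forall>U. U \<subseteq> S1 \<longrightarrow> weakly_wandering g U \<longrightarrow> wandering g U" .
    obtain U where U: "s1_open U" "U \<noteq> {}" "weakly_wandering g U" using P1 by blast
    have "U \<subseteq> S1" using U(1) unfolding s1_open_def by simp
    thus "\<exists>U. s1_open U \<and> U \<noteq> {} \<and> wandering g U" using U P2 by blast
  qed
qed

end
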